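(* There is a 2-player, 2-action, 1-state Markov game with horizon $2$ and a non-Markov (general) policy $\sigma_2$ for player 2 such that for all Markov policies $\sigma_1$ of player 1, $V_1^{\sigma_1\times\sigma_2}=1/2$, yet $\max_{\sigma_1}V_1^{\sigma_1\times\sigma_2}=3/4$, where the maximum is over all (randomized, possibly non-Markov) general policies $\sigma_1$ of player 1.
   Context: An $m$-player finite-horizon Markov game is $\mathcal{G}=(\mathcal{S},H,(\mathcal{A}_i)_{i\in[m]},\mathbb{P},(R_i)_{i\in[m]},\mu)$ with finite states, horizon $H$, finite action sets, transition kernels, deterministic rewards $R_{i,h}(s,\mathbf{a})\in[-1/H,1/H]$, and initial distribution $\mu$. In an episode agents choose actions simultaneously at each step, each agent $i$ observes its own reward $r_{i,h}=R_{i,h}(s_h,\mathbf{a}_h)$, and the state transitions. A general policy of agent $i$ maps its history $(s_1,a_{i,1},r_{i,1},\dots,s_{h-1},a_{i,h-1},r_{i,h-1})$ and current state $s_h$ to a distribution over its actions; a Markov policy depends only on $h$ and $s_h$. $V_1^{\sigma_1\times\sigma_2}$ is player 1's expected total reward when players independently follow $\sigma_1,\sigma_2$. *)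

theory Defs
  imports "HOL-Probability.Probability"
begin

text \<open>A 2-player Markov game with a single state (type unit), horizon H = 2 and
action sets bool for both players.  The transition kernel and the initial
distribution are the (unique) point masses on the single state.
Rewards: R i h a1 a2 for player i (1 or 2), step h (1 or 2).
Rewards are deterministic and bounded by 1/H = 1/2 in absolute value.\<close>

type_synonym rewards = "nat \<Rightarrow> nat \<Rightarrow> bool \<Rightarrow> bool \<Rightarrow> real"

definition valid_game :: "rewards \<Rightarrow> bool" where
  "valid_game R \<longleftrightarrow>
     (\<forall>i\<in>{1,2}. \<forall>h\<in>{1,2::nat}. \<forall>a1 a2. \<bar>R i h a1 a2\<bar> \<le> 1/2)"

text \<open>A general policy of a player maps its own history
(s_1,a_1,r_1,...,s_{h-1},a_{h-1},r_{h-1}) (a list of triples) and the current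
state s_h to a distribution over its actions.\<close>

type_synonym policy = "(unit \<times> bool \<times> real) list \<Rightarrow> unit \<Rightarrow> bool pmf"

definition markov_policy :: "policy \<Rightarrow> bool" where
  "markov_policy \<sigma> \<longleftrightarrow>
     (\<exists>f :: nat \<Rightarrow> unit \<Rightarrow> bool pmf. \<forall>hist s. \<sigma> hist s = f (length hist + 1) s)"

definition V1 :: "rewards \<Rightarrow> policy \<Rightarrow> policy \<Rightarrow> real" where
  "V1 R \<sigma>1 \<sigma>2 =
     measure_pmf.expectation (\<sigma>1 [] ()) (\<lambda>a1.
     measure_pmf.expectation (\<sigma>2 [] ()) (\<lambda>a2.
       R 1 1 a1 a2 +
       measure_pmf.expectation (\<sigma>1 [((), a1, R 1 1 a1 a2)] ()) (\<lambda>b1.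
       measure_pmf.expectation (\<sigma>2 [((), a2, R 2 1 a1 a2)] ()) (\<lambda>b2.
         R 1 2 b1 b2))))"

end

theory Submission
  imports Defs
begin

lemma exp_bool: "measure_pmf.expectation p (f :: bool \<Rightarrow> real) = pmf p True * f True + pmf p False * f False"
proof -
  have "measure_pmf.expectation p f = (\<Sum>a\<in>UNIV. pmf p a * f a)"
    by (subst integral_measure_pmf_real[where A=UNIV]) (auto simp: mult.commute)
  also have "\<dots> = pmf p True * f True + pmf p False * f False"
    by (simp add: UNIV_bool)
  finally show ?thesis .
qed

lemma pmf_bool_sum: "pmf p False = 1 - pmf p True"
proof -
  have "(\<Sum>a\<in>UNIV. pmf p a) = 1" by (rule sum_pmf_eq_1) auto
  then show ?thesis by (simp add: UNIV_bool)
qed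

lemma exp_le:
  fixes f :: "bool \<Rightarrow> real"
  assumes "\<And>x. f x \<le> (c::real)"
  shows "measure_pmf.expectation p f \<le> c"
proof -
  have "pmf p True * f True \<le> pmf p True * c" using assms by (simp add: mult_left_mono)
  moreover have "pmf p False * f False \<le> pmf p False * c" using assms by (simp add: mult_left_mono)
  ultimately show ?thesis unfolding exp_bool pmf_bool_sum by (simp add: algebra_simps)
qed

definition RR :: rewards where
  "RR i h a1 a2 = (if i = 1 \<and> h = 1 then (if a2 then 1/2 else 0)
                  else if i = 2 \<and> h = 1 then (if a1 then 1/2 else 0)
                  else if i = 1 \<and> h = 2 then (if a1 = a2 then 1/2 else 0)
                  else 0)"

definition S2 :: policy where
  "S2 hist s = (case hist of [] \<Rightarrow> bernoulli_pmf (1/2)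
                 | [(_, a2, r)] \<Rightarrow> return_pmf (a2 \<noteq> (r = 1/2))
                 | _ \<Rightarrow> return_pmf True)"

definition S1 :: policy where
  "S1 hist s = (case hist of [] \<Rightarrow> return_pmf True
                 | [(_, a1, r)] \<Rightarrow> return_pmf (a1 \<noteq> (r = 1/2))
                 | _ \<Rightarrow> return_pmf True)"

theorem proposition6p1:
  shows "\<exists>R \<sigma>2. valid_game R \<and>
           (\<forall>\<sigma>1. markov_policy \<sigma>1 \<longrightarrow> V1 R \<sigma>1 \<sigma>2 = 1/2) \<and>
           (\<exists>\<sigma>1. V1 R \<sigma>1 \<sigma>2 = 3/4) \<and>
           (\<forall>\<sigma>1. V1 R \<sigma>1 \<sigma>2 \<le> 3/4)"
proof (intro exI conjI allI impI)
  show "valid_game RR" by (auto simp: valid_game_def RR_def)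
next
  fix \<sigma>1 assume "markov_policy \<sigma>1"
  then obtain f where f: "\<And>hist s. \<sigma>1 hist s = f (length hist + 1) s"
    unfolding markov_policy_def by blast
  show "V1 RR \<sigma>1 S2 = 1/2"
    unfolding V1_def f by (simp add: exp_bool pmf_bool_sum RR_def S2_def field_simps; algebra)
next
  show "V1 RR S1 S2 = 3/4"
    unfolding V1_def by (simp add: exp_bool RR_def S1_def S2_def)
next
  fix \<sigma>1
  show "V1 RR \<sigma>1 S2 \<le> 3/4"
    unfolding V1_def
  proof (rule exp_le)
    fix a1
    have i: "measure_pmf.expectation q (\<lambda>b1. measure_pmf.expectation q' (\<lambda>b2. RR 1 2 b1 b2)) \<le> 1/2" for q q'
      by (intro exp_le) (simp add: RR_def)
    define F where "F = (\<lambda>a2. RR 1 1 a1 a2 +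
       measure_pmf.expectation (\<sigma>1 [((), a1, RR 1 1 a1 a2)] ()) (\<lambda>b1.
       measure_pmf.expectation (S2 [((), a2, RR 2 1 a1 a2)] ()) (\<lambda>b2. RR 1 2 b1 b2)))"
    have r1: "RR 1 1 a1 True = 1/2" and r0: "RR 1 1 a1 False = 0" by (simp_all add: RR_def)
    have t: "F True \<le> 1" unfolding F_def
      using i[of "\<sigma>1 [((), a1, RR 1 1 a1 True)] ()" "S2 [((), True, RR 2 1 a1 True)] ()"]
      by (simp only: r1)
    have f: "F False \<le> 1/2" unfolding F_def
      using i[of "\<sigma>1 [((), a1, RR 1 1 a1 False)] ()" "S2 [((), False, RR 2 1 a1 False)] ()"]
      by (simp only: r0)
    have "measure_pmf.expectation (S2 [] ()) F = 1/2 * F True + 1/2 * F False"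
      by (simp add: exp_bool S2_def)
    with t f have "measure_pmf.expectation (S2 [] ()) F \<le> 3/4" by simp
    then show "measure_pmf.expectation (S2 [] ()) (\<lambda>a2. RR 1 1 a1 a2 +
       measure_pmf.expectation (\<sigma>1 [((), a1, RR 1 1 a1 a2)] ()) (\<lambda>b1.
       measure_pmf.expectation (S2 [((), a2, RR 2 1 a1 a2)] ()) (\<lambda>b2. RR 1 2 b1 b2))) \<le> 3/4"
      by (simp add: F_def)
  qed
qed

end
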